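(* Let $X$ be a topological space with a Borel measure $\mu$, let $\mathcal A$ be the family of $G_\delta$ subsets of $X$ that are $\mu$-null, and let $\mathcal B=\{\{x\}:x\in X\}$. Then One has a winning strategy in $G_1(\mathscr N[\mathcal A],\neg\mathcal O(X,\mathcal B))$ if and only if $X$ is $\mu$-null, i.e., $\mu$ is the zero measure.
   Context: $\mathcal O(X,\mathcal B)$ with $\mathcal B$ the singletons is the set of open covers $\mathscr U$ of $X$ with $X\notin\mathscr U$. $\mathscr N[\mathcal A]=\{\mathscr N(A):A\in\mathcal A\}$ with $\mathscr N(A)$ the set of open $U\neq X$ with $A\subseteq U$; in $G_1(\mathscr N[\mathcal A],\neg\mathcal O(X,\mathcal B))$, at each inning $n\in\omega$ One plays some $A_n\in\mathcal A$, Two answers with an open $U_n\supseteq A_n$, $U_n\neq X$, and One wins iff $\{U_n:n\in\omega\}\in\mathcal O(X,\mathcal B)$. A strategy for One maps finite sequences of Two's moves to moves; it is winning if One wins every play following it. *)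

theory Defs
  imports "HOL-Analysis.Analysis" "HOL-Probability.Probability"
begin

definition borel_measure_on :: "'a topology \<Rightarrow> 'a measure \<Rightarrow> bool" where
  "borel_measure_on X M \<longleftrightarrow> space M = topspace X \<and>
     sets M = sigma_sets (topspace X) {U. openin X U}"

definition null_gdelta :: "'a topology \<Rightarrow> 'a measure \<Rightarrow> 'a set set" where
  "null_gdelta X M = {A. gdelta_in X A \<and> A \<in> null_sets M}"

text \<open>O(X, B) with B the singletons: open covers U of X with X not in U.\<close>
definition open_covers_nontrivial :: "'a topology \<Rightarrow> 'a set set set" where
  "open_covers_nontrivial X =
     {\<U>. (\<forall>U\<in>\<U>. openin X U) \<and> \<Union>\<U> = topspace X \<and> topspace X \<notin> \<U>}"

definition nbhd_moves :: "'a topology \<Rightarrow> 'a set \<Rightarrow> 'a set set" where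
  "nbhd_moves X A = {U. openin X U \<and> U \<noteq> topspace X \<and> A \<subseteq> U}"

text \<open>A strategy for One in G_1(N[A], not O(X,B)) maps the finite list of Two's
  previous moves to One's next move, an element of the family A.\<close>
definition one_winning_strategy ::
  "'a topology \<Rightarrow> 'a set set \<Rightarrow> ('a set list \<Rightarrow> 'a set) \<Rightarrow> bool" where
  "one_winning_strategy X \<A> \<sigma> \<longleftrightarrow>
     (\<forall>s. \<sigma> s \<in> \<A>) \<and>
     (\<forall>U :: nat \<Rightarrow> 'a set.
        (\<forall>n. U n \<in> nbhd_moves X (\<sigma> (map U [0..<n]))) \<longrightarrow>
        range U \<in> open_covers_nontrivial X)"

definition one_has_winning_strategy :: "'a topology \<Rightarrow> 'a set set \<Rightarrow> bool" where
  "one_has_winning_strategy X \<A> \<longleftrightarrow> (\<exists>\<sigma>. one_winning_strategy X \<A> \<sigma>)"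

end

theory Submission
  imports Defs
begin

lemma gdelta_seq:
  assumes "gdelta_in X A"
  shows "\<exists>V::nat \<Rightarrow> 'a set. (\<forall>k. openin X (V k)) \<and> \<Inter>(range V) = A"
proof -
  from assms have sub: "A \<subseteq> topspace X" and "(countable intersection_of openin X) A"
    by (auto simp: gdelta_in_alt)
  then obtain T where T: "countable T" "T \<subseteq> Collect (openin X)" "\<Inter>T = A"
    by (auto simp: intersection_of_def)
  define T' where "T' = insert (topspace X) T"
  have "countable T'" "T' \<noteq> {}" "\<forall>U\<in>T'. openin X U" "\<Inter>T' = A"
    using T sub by (auto simp: T'_def)
  then show ?thesis
    by (intro exI[of _ "from_nat_into T'"]) (simp add: from_nat_into)
qed

definition playof :: "('a set list \<Rightarrow> 'a set) \<Rightarrow> ('a set \<Rightarrow> nat \<Rightarrow> 'a set) \<Rightarrow> nat list \<Rightarrow> 'a set list" where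
  "playof \<sigma> V ks = foldl (\<lambda>ms k. ms @ [V (\<sigma> ms) k]) [] ks"

lemma playof_snoc: "playof \<sigma> V (ks @ [k]) = playof \<sigma> V ks @ [V (\<sigma> (playof \<sigma> V ks)) k]"
  by (simp add: playof_def)

lemma playof_Nil: "playof \<sigma> V [] = []"
  by (simp add: playof_def)

primrec KK :: "('a set list \<Rightarrow> 'a set) \<Rightarrow> ('a set \<Rightarrow> nat \<Rightarrow> 'a set) \<Rightarrow> 'a \<Rightarrow> nat \<Rightarrow> nat list" where
  "KK \<sigma> V x 0 = []"
| "KK \<sigma> V x (Suc n) = KK \<sigma> V x n @ [SOME k. x \<notin> V (\<sigma> (playof \<sigma> V (KK \<sigma> V x n))) k]"

theorem mainTheorem19:
  fixes X :: "'a topology" and M :: "'a measure"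
  assumes "borel_measure_on X M"
  shows "one_has_winning_strategy X (null_gdelta X M) \<longleftrightarrow> emeasure M (topspace X) = 0"
proof
  assume "emeasure M (topspace X) = 0"
  moreover have "topspace X \<in> sets M" using assms
    by (metis borel_measure_on_def sets.top)
  ultimately have "topspace X \<in> null_gdelta X M"
    by (simp add: null_gdelta_def null_setsI)
  then have "one_winning_strategy X (null_gdelta X M) (\<lambda>_. topspace X)"
    unfolding one_winning_strategy_def nbhd_moves_def
    by (auto dest: openin_subset)
  then show "one_has_winning_strategy X (null_gdelta X M)"
    by (auto simp: one_has_winning_strategy_def)
next
  assume "one_has_winning_strategy X (null_gdelta X M)"
  then obtain \<sigma> where \<sigma>: "one_winning_strategy X (null_gdelta X M) \<sigma>"
    by (auto simp: one_has_winning_strategy_def)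
  have mem: "\<sigma> s \<in> null_gdelta X M" for s using \<sigma> by (simp add: one_winning_strategy_def)
  have "\<forall>A. \<exists>V::nat \<Rightarrow> 'a set. A \<in> null_gdelta X M \<longrightarrow> (\<forall>k. openin X (V k)) \<and> \<Inter>(range V) = A"
    using gdelta_seq unfolding null_gdelta_def by blast
  then obtain V :: "'a set \<Rightarrow> nat \<Rightarrow> 'a set" where V0: "\<forall>A. A \<in> null_gdelta X M \<longrightarrow> (\<forall>k. openin X (V A k)) \<and> \<Inter>(range (V A)) = A"
    using choice[of "\<lambda>A (V::nat \<Rightarrow> 'a set). A \<in> null_gdelta X M \<longrightarrow> (\<forall>k. openin X (V k)) \<and> \<Inter>(range V) = A"] by blast
  have V: "\<And>A k. A \<in> null_gdelta X M \<Longrightarrow> openin X (V A k)"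
    "\<And>A. A \<in> null_gdelta X M \<Longrightarrow> \<Inter>(range (V A)) = A"
    using V0 by blast+
  define N where "N = (\<Union>ks. \<sigma> (playof \<sigma> V ks))"
  have N: "N \<in> null_sets M" unfolding N_def
    using mem by (intro null_sets_UN) (simp add: null_gdelta_def)
  show "emeasure M (topspace X) = 0"
  proof (rule ccontr)
    assume ne: "emeasure M (topspace X) \<noteq> 0"
    have "topspace X \<noteq> N"
      using N ne assms by (auto simp: borel_measure_on_def)
    moreover have "N \<subseteq> topspace X"
      using null_sets.sets_into_space[OF N] assms by (simp add: borel_measure_on_def)
    ultimately obtain x where x: "x \<in> topspace X" "x \<notin> N" by blast
    define U where "U n = V (\<sigma> (playof \<sigma> V (KK \<sigma> V x n)))
        (SOME k. x \<notin> V (\<sigma> (playof \<sigma> V (KK \<sigma> V x n))) k)" for n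
    have mapU: "map U [0..<n] = playof \<sigma> V (KK \<sigma> V x n)" for n
      by (induction n) (simp_all add: playof_snoc U_def playof_Nil)
    have xU: "x \<notin> U n" for n
    proof -
      let ?A = "\<sigma> (playof \<sigma> V (KK \<sigma> V x n))"
      have "x \<notin> ?A" using x(2) by (auto simp: N_def)
      then have "\<exists>k. x \<notin> V ?A k" using V(2)[OF mem] by blast
      then show ?thesis unfolding U_def by (rule someI_ex)
    qed
    have "\<forall>n. U n \<in> nbhd_moves X (\<sigma> (map U [0..<n]))"
    proof
      fix n
      let ?A = "\<sigma> (playof \<sigma> V (KK \<sigma> V x n))"
      have "openin X (U n)" unfolding U_def by (rule V(1)[OF mem])
      moreover have "?A \<subseteq> U n" unfolding U_def using V(2)[OF mem] by blast
      ultimately show "U n \<in> nbhd_moves X (\<sigma> (map U [0..<n]))"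
        using xU[of n] x(1) by (auto simp: nbhd_moves_def mapU)
    qed
    then have "range U \<in> open_covers_nontrivial X"
      using \<sigma> by (simp add: one_winning_strategy_def)
    then have "\<Union>(range U) = topspace X" by (simp add: open_covers_nontrivial_def)
    then show False using x(1) xU by blast
  qed
qed

end
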